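(* Let $\sigma$ be a signature including $\{\triangleright, ;\}$ and let $\mathcal{A}$ be a $\sigma$-algebra. (1) If $\mathcal{A}$ has a join-complete representation by partial functions, then composition in $\mathcal{A}$ is completely left-distributive over joins: for every $S \subseteq \mathcal{A}$ with $\bigvee S$ existing and every $a\in\mathcal{A}$, $\bigvee\{a;s : s\in S\}$ exists and equals $a ; \bigvee S$. (2) If $\mathcal{A}$ has a meet-complete representation by partial functions, then composition in $\mathcal{A}$ is completely left-distributive over meets: for every nonempty $S\subseteq\mathcal{A}$ with $\bigwedge S$ existing and every $a\in\mathcal{A}$, $\bigwedge\{a;s:s\in S\}$ exists and equals $a;\bigwedge S$.
   Context: Signatures $\sigma$ are sets of operation symbols drawn from: $\triangleright$ (antidomain restriction), $;$ (composition), $\wedge$ (intersection), $\mathrm{upd}$ (update), $\sqcup$ (preferential union), $\mathsf{D}$ (domain), $\mathsf{A}$ (antidomain), interpreted on partial functions as: $f \triangleright g = \{(x,y) \in g : x \notin \mathrm{dom}(f)\}$; $f;g=\{(x,z):\exists y\,((x,y)\in f,(y,z)\in g)\}$; $f\wedge g = f\cap g$; $\mathrm{upd}(f,g)(x)$ is $f(x)$ if $f(x)$ defined and $g(x)$ undefined, $g(x)$ if both defined, undefined otherwise; $(f\sqcup g)(x)$ is $f(x)$ if defined, else $g(x)$; $\mathsf{D}(f)$ = identity on $\mathrm{dom}(f)$; $\mathsf{A}(f)$ = identity on the complement of $\mathrm{dom}(f)$ in the base. A representation by partial functions is an isomorphism onto a $\sigma$-algebra of partial functions with these operations. Define $0 :=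 a\triangleright a$, $a\lhd b := (a\triangleright b)\triangleright b$, $a \le b :\iff a\lhd b = a$; for representable algebras this is a partial order and $a\le b\iff\theta(a)\subseteq\theta(b)$. $\theta$ is join complete if $\theta(\bigvee S)=\bigcup\theta[S]$ whenever $\bigvee S$ exists; meet complete if $\theta(\bigwedge S)=\bigcap\theta[S]$ whenever $S$ is nonempty and $\bigwedge S$ exists. *)

theory Defs
  imports Main
begin

datatype opsym = Restr | Comp | Meet | Upd | Pref | Dom | Antidom

text \<open>An algebra in the full language; only the operations named in the
signature sigma matter (the others are ignored).\<close>
record 'a alg =
  carrier :: "'a set"
  restr   :: "'a \<Rightarrow> 'a \<Rightarrow> 'a"
  comp    :: "'a \<Rightarrow> 'a \<Rightarrow> 'a"
  meet    :: "'a \<Rightarrow> 'a \<Rightarrow> 'a"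
  upd     :: "'a \<Rightarrow> 'a \<Rightarrow> 'a"
  pref    :: "'a \<Rightarrow> 'a \<Rightarrow> 'a"
  dom     :: "'a \<Rightarrow> 'a"
  antidom :: "'a \<Rightarrow> 'a"

definition sigma_algebra :: "opsym set \<Rightarrow> 'a alg \<Rightarrow> bool" where
  "sigma_algebra \<sigma> \<A> \<longleftrightarrow>
     (Restr \<in> \<sigma> \<longrightarrow> (\<forall>a\<in>carrier \<A>. \<forall>b\<in>carrier \<A>. restr \<A> a b \<in> carrier \<A>)) \<and>
     (Comp \<in> \<sigma> \<longrightarrow> (\<forall>a\<in>carrier \<A>. \<forall>b\<in>carrier \<A>. comp \<A> a b \<in> carrier \<A>)) \<and>
     (Meet \<in> \<sigma> \<longrightarrow> (\<forall>a\<in>carrier \<A>. \<forall>b\<in>carrier \<A>. meet \<A> a b \<in> carrier \<A>)) \<and>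
     (Upd \<in> \<sigma> \<longrightarrow> (\<forall>a\<in>carrier \<A>. \<forall>b\<in>carrier \<A>. upd \<A> a b \<in> carrier \<A>)) \<and>
     (Pref \<in> \<sigma> \<longrightarrow> (\<forall>a\<in>carrier \<A>. \<forall>b\<in>carrier \<A>. pref \<A> a b \<in> carrier \<A>)) \<and>
     (Dom \<in> \<sigma> \<longrightarrow> (\<forall>a\<in>carrier \<A>. dom \<A> a \<in> carrier \<A>)) \<and>
     (Antidom \<in> \<sigma> \<longrightarrow> (\<forall>a\<in>carrier \<A>. antidom \<A> a \<in> carrier \<A>))"

definition pfun_on :: "'x set \<Rightarrow> ('x \<times> 'x) set \<Rightarrow> bool" where
  "pfun_on X f \<longleftrightarrow> f \<subseteq> X \<times> X \<and> single_valued f"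

definition pf_restr :: "('x \<times> 'x) set \<Rightarrow> ('x \<times> 'x) set \<Rightarrow> ('x \<times> 'x) set" where
  "pf_restr f g = {(x, y) \<in> g. x \<notin> Domain f}"

definition pf_comp :: "('x \<times> 'x) set \<Rightarrow> ('x \<times> 'x) set \<Rightarrow> ('x \<times> 'x) set" where
  "pf_comp f g = f O g"

definition pf_meet :: "('x \<times> 'x) set \<Rightarrow> ('x \<times> 'x) set \<Rightarrow> ('x \<times> 'x) set" where
  "pf_meet f g = f \<inter> g"

definition pf_upd :: "('x \<times> 'x) set \<Rightarrow> ('x \<times> 'x) set \<Rightarrow> ('x \<times> 'x) set" where
  "pf_upd f g = {(x, y) \<in> f. x \<notin> Domain g} \<union> {(x, y) \<in> g. x \<in> Domain f}"

definition pf_pref :: "('x \<times> 'x) set \<Rightarrow> ('x \<times> 'x) set \<Rightarrow> ('x \<times> 'x) set" where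
  "pf_pref f g = f \<union> {(x, y) \<in> g. x \<notin> Domain f}"

definition pf_dom :: "('x \<times> 'x) set \<Rightarrow> ('x \<times> 'x) set" where
  "pf_dom f = Id_on (Domain f)"

definition pf_antidom :: "'x set \<Rightarrow> ('x \<times> 'x) set \<Rightarrow> ('x \<times> 'x) set" where
  "pf_antidom X f = Id_on (X - Domain f)"

definition representation ::
  "opsym set \<Rightarrow> 'a alg \<Rightarrow> 'x set \<Rightarrow> ('a \<Rightarrow> ('x \<times> 'x) set) \<Rightarrow> bool" where
  "representation \<sigma> \<A> X \<theta> \<longleftrightarrow>
     inj_on \<theta> (carrier \<A>) \<and>
     (\<forall>a\<in>carrier \<A>. pfun_on X (\<theta> a)) \<and>
     (Restr \<in> \<sigma> \<longrightarrow> (\<forall>a\<in>carrier \<A>. \<forall>b\<in>carrier \<A>. \<theta> (restr \<A> a b) = pf_restr (\<theta> a) (\<theta> b))) \<and>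
     (Comp \<in> \<sigma> \<longrightarrow> (\<forall>a\<in>carrier \<A>. \<forall>b\<in>carrier \<A>. \<theta> (comp \<A> a b) = pf_comp (\<theta> a) (\<theta> b))) \<and>
     (Meet \<in> \<sigma> \<longrightarrow> (\<forall>a\<in>carrier \<A>. \<forall>b\<in>carrier \<A>. \<theta> (meet \<A> a b) = pf_meet (\<theta> a) (\<theta> b))) \<and>
     (Upd \<in> \<sigma> \<longrightarrow> (\<forall>a\<in>carrier \<A>. \<forall>b\<in>carrier \<A>. \<theta> (upd \<A> a b) = pf_upd (\<theta> a) (\<theta> b))) \<and>
     (Pref \<in> \<sigma> \<longrightarrow> (\<forall>a\<in>carrier \<A>. \<forall>b\<in>carrier \<A>. \<theta> (pref \<A> a b) = pf_pref (\<theta> a) (\<theta> b))) \<and>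
     (Dom \<in> \<sigma> \<longrightarrow> (\<forall>a\<in>carrier \<A>. \<theta> (dom \<A> a) = pf_dom (\<theta> a))) \<and>
     (Antidom \<in> \<sigma> \<longrightarrow> (\<forall>a\<in>carrier \<A>. \<theta> (antidom \<A> a) = pf_antidom X (\<theta> a)))"

definition lhd :: "'a alg \<Rightarrow> 'a \<Rightarrow> 'a \<Rightarrow> 'a" where
  "lhd \<A> a b = restr \<A> (restr \<A> a b) b"

definition leq :: "'a alg \<Rightarrow> 'a \<Rightarrow> 'a \<Rightarrow> bool" where
  "leq \<A> a b \<longleftrightarrow> lhd \<A> a b = a"

definition is_join :: "'a alg \<Rightarrow> 'a set \<Rightarrow> 'a \<Rightarrow> bool" where
  "is_join \<A> S b \<longleftrightarrow> b \<in> carrier \<A> \<and> (\<forall>s\<in>S. leq \<A> s b) \<and>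
     (\<forall>c\<in>carrier \<A>. (\<forall>s\<in>S. leq \<A> s c) \<longrightarrow> leq \<A> b c)"

definition is_meet :: "'a alg \<Rightarrow> 'a set \<Rightarrow> 'a \<Rightarrow> bool" where
  "is_meet \<A> S b \<longleftrightarrow> b \<in> carrier \<A> \<and> (\<forall>s\<in>S. leq \<A> b s) \<and>
     (\<forall>c\<in>carrier \<A>. (\<forall>s\<in>S. leq \<A> c s) \<longrightarrow> leq \<A> c b)"

definition join_complete ::
  "'a alg \<Rightarrow> ('a \<Rightarrow> ('x \<times> 'x) set) \<Rightarrow> bool" where
  "join_complete \<A> \<theta> \<longleftrightarrow>
     (\<forall>S b. S \<subseteq> carrier \<A> \<and> is_join \<A> S b \<longrightarrow> \<theta> b = \<Union> (\<theta> ` S))"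

definition meet_complete ::
  "'a alg \<Rightarrow> ('a \<Rightarrow> ('x \<times> 'x) set) \<Rightarrow> bool" where
  "meet_complete \<A> \<theta> \<longleftrightarrow>
     (\<forall>S b. S \<subseteq> carrier \<A> \<and> S \<noteq> {} \<and> is_meet \<A> S b \<longrightarrow> \<theta> b = \<Inter> (\<theta> ` S))"

end

theory Submission
  imports Defs
begin

lemma leq_iff:
  assumes R: "representation \<sigma> \<A> X \<theta>" and r: "Restr \<in> \<sigma>" and sa: "sigma_algebra \<sigma> \<A>"
    and a: "a \<in> carrier \<A>" and b: "b \<in> carrier \<A>"
  shows "leq \<A> a b \<longleftrightarrow> \<theta> a \<subseteq> \<theta> b"
proof -
  have cl: "restr \<A> a b \<in> carrier \<A>" "restr \<A> (restr \<A> a b) b \<in> carrier \<A>"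
    using sa r a b unfolding sigma_algebra_def by auto
  have inj: "inj_on \<theta> (carrier \<A>)" using R unfolding representation_def by auto
  have th: "\<theta> (restr \<A> (restr \<A> a b) b) = pf_restr (pf_restr (\<theta> a) (\<theta> b)) (\<theta> b)"
    using R r a b cl unfolding representation_def by auto
  have eq: "pf_restr (pf_restr (\<theta> a) (\<theta> b)) (\<theta> b) = {(x,y)\<in>\<theta> b. x \<in> Domain (\<theta> a)}"
    unfolding pf_restr_def by auto
  have sva: "single_valued (\<theta> a)" and svb: "single_valued (\<theta> b)"
    using R a b unfolding representation_def pfun_on_def by auto
  have "leq \<A> a b \<longleftrightarrow> \<theta> (restr \<A> (restr \<A> a b) b) = \<theta> a"
    unfolding leq_def lhd_def using inj cl a by (metis inj_on_eq_iff)
  also have "\<dots> \<longleftrightarrow> {(x,y)\<in>\<theta> b. x \<in> Domain (\<theta> a)} = \<theta> a" using th eq by simp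
  also have "\<dots> \<longleftrightarrow> \<theta> a \<subseteq> \<theta> b"
  proof
    assume "{(x,y)\<in>\<theta> b. x \<in> Domain (\<theta> a)} = \<theta> a" then show "\<theta> a \<subseteq> \<theta> b" by auto
  next
    assume s: "\<theta> a \<subseteq> \<theta> b"
    show "{(x,y)\<in>\<theta> b. x \<in> Domain (\<theta> a)} = \<theta> a"
    proof
      show "{(x,y)\<in>\<theta> b. x \<in> Domain (\<theta> a)} \<subseteq> \<theta> a"
      proof clarify
        fix x y z assume "(x,y) \<in> \<theta> b" "(x,z) \<in> \<theta> a"
        then show "(x,y) \<in> \<theta> a" using s svb by (metis single_valuedD subsetD)
      qed
    qed (use s in auto)
  qed
  finally show ?thesis .
qed

theorem lemma5p5:
  fixes \<sigma> :: "opsym set" and \<A> :: "'a alg"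
  assumes "Restr \<in> \<sigma>" and "Comp \<in> \<sigma>" and "sigma_algebra \<sigma> \<A>"
  shows "((\<exists>(X :: 'x set) \<theta>. representation \<sigma> \<A> X \<theta> \<and> join_complete \<A> \<theta>) \<longrightarrow>
           (\<forall>S b a. S \<subseteq> carrier \<A> \<and> is_join \<A> S b \<and> a \<in> carrier \<A> \<longrightarrow>
              is_join \<A> ((\<lambda>s. comp \<A> a s) ` S) (comp \<A> a b)))
       \<and> ((\<exists>(X :: 'x set) \<theta>. representation \<sigma> \<A> X \<theta> \<and> meet_complete \<A> \<theta>) \<longrightarrow>
           (\<forall>S b a. S \<subseteq> carrier \<A> \<and> S \<noteq> {} \<and> is_meet \<A> S b \<and> a \<in> carrier \<A> \<longrightarrow>
              is_meet \<A> ((\<lambda>s. comp \<A> a s) ` S) (comp \<A> a b)))"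
proof (intro conjI impI allI)
  fix S b a
  assume "\<exists>(X :: 'x set) \<theta>. representation \<sigma> \<A> X \<theta> \<and> join_complete \<A> \<theta>"
  then obtain X :: "'x set" and \<theta> where R: "representation \<sigma> \<A> X \<theta>" and jc: "join_complete \<A> \<theta>" by blast
  assume h: "S \<subseteq> carrier \<A> \<and> is_join \<A> S b \<and> a \<in> carrier \<A>"
  have S: "S \<subseteq> carrier \<A>" and J: "is_join \<A> S b" and a: "a \<in> carrier \<A>" using h by auto
  have b: "b \<in> carrier \<A>" using J unfolding is_join_def by auto
  have tb: "\<theta> b = \<Union> (\<theta> ` S)" using jc S J unfolding join_complete_def by auto
  have cc: "\<And>x y. x \<in> carrier \<A> \<Longrightarrow> y \<in> carrier \<A> \<Longrightarrow> comp \<A> x y \<in> carrier \<A>"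
    using assms unfolding sigma_algebra_def by auto
  have tc: "\<And>x y. x \<in> carrier \<A> \<Longrightarrow> y \<in> carrier \<A> \<Longrightarrow> \<theta> (comp \<A> x y) = \<theta> x O \<theta> y"
    using R assms unfolding representation_def pf_comp_def by auto
  note L = leq_iff[OF R assms(1) assms(3)]
  have key: "\<theta> (comp \<A> a b) = \<Union> ((\<lambda>s. \<theta> (comp \<A> a s)) ` S)"
  proof -
    have "\<theta> (comp \<A> a b) = \<theta> a O \<Union> (\<theta> ` S)" using tb tc a b by simp
    also have "\<dots> = \<Union> ((\<lambda>s. \<theta> a O \<theta> s) ` S)" by blast
    also have "\<dots> = \<Union> ((\<lambda>s. \<theta> (comp \<A> a s)) ` S)" by (rule SUP_cong[OF refl]) (use tc a S in auto)
    finally show ?thesis .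
  qed
  show "is_join \<A> ((\<lambda>s. comp \<A> a s) ` S) (comp \<A> a b)"
    unfolding is_join_def
  proof (intro conjI ballI impI)
    show "comp \<A> a b \<in> carrier \<A>" using cc a b .
  next
    fix t assume "t \<in> (\<lambda>s. comp \<A> a s) ` S"
    then obtain s where s: "s \<in> S" "t = comp \<A> a s" by blast
    have sc: "s \<in> carrier \<A>" using s S by auto
    have "\<theta> (comp \<A> a s) \<subseteq> \<theta> (comp \<A> a b)" using key s by auto
    then show "leq \<A> t (comp \<A> a b)" using L[OF cc[OF a sc] cc[OF a b]] s by simp
  next
    fix c assume c: "c \<in> carrier \<A>" and up: "\<forall>t\<in>(\<lambda>s. comp \<A> a s) ` S. leq \<A> t c"
    have "\<forall>s\<in>S. \<theta> (comp \<A> a s) \<subseteq> \<theta> c"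
    proof
      fix s assume s: "s \<in> S" hence sc: "s \<in> carrier \<A>" using S by auto
      have "leq \<A> (comp \<A> a s) c" using up s by auto
      then show "\<theta> (comp \<A> a s) \<subseteq> \<theta> c" using L[OF cc[OF a sc] c] by simp
    qed
    then have "\<theta> (comp \<A> a b) \<subseteq> \<theta> c" using key by auto
    then show "leq \<A> (comp \<A> a b) c" using L[OF cc[OF a b] c] by simp
  qed
next
  fix S b a
  assume "\<exists>(X :: 'x set) \<theta>. representation \<sigma> \<A> X \<theta> \<and> meet_complete \<A> \<theta>"
  then obtain X :: "'x set" and \<theta> where R: "representation \<sigma> \<A> X \<theta>" and mc: "meet_complete \<A> \<theta>" by blast
  assume h: "S \<subseteq> carrier \<A> \<and> S \<noteq> {} \<and> is_meet \<A> S b \<and> a \<in> carrier \<A>"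
  have S: "S \<subseteq> carrier \<A>" and ne: "S \<noteq> {}" and J: "is_meet \<A> S b" and a: "a \<in> carrier \<A>" using h by auto
  have b: "b \<in> carrier \<A>" using J unfolding is_meet_def by auto
  have tb: "\<theta> b = \<Inter> (\<theta> ` S)" using mc S ne J unfolding meet_complete_def by auto
  have cc: "\<And>x y. x \<in> carrier \<A> \<Longrightarrow> y \<in> carrier \<A> \<Longrightarrow> comp \<A> x y \<in> carrier \<A>"
    using assms unfolding sigma_algebra_def by auto
  have tc: "\<And>x y. x \<in> carrier \<A> \<Longrightarrow> y \<in> carrier \<A> \<Longrightarrow> \<theta> (comp \<A> x y) = \<theta> x O \<theta> y"
    using R assms unfolding representation_def pf_comp_def by auto
  have sva: "single_valued (\<theta> a)" using R a unfolding representation_def pfun_on_def by auto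
  note L = leq_iff[OF R assms(1) assms(3)]
  have key: "\<theta> (comp \<A> a b) = \<Inter> ((\<lambda>s. \<theta> (comp \<A> a s)) ` S)"
  proof
    show "\<theta> (comp \<A> a b) \<subseteq> \<Inter> ((\<lambda>s. \<theta> (comp \<A> a s)) ` S)"
    proof (rule INT_greatest)
      fix s assume s: "s \<in> S" hence sc: "s \<in> carrier \<A>" using S by auto
      have "\<theta> b \<subseteq> \<theta> s" using tb s by auto
      then show "\<theta> (comp \<A> a b) \<subseteq> \<theta> (comp \<A> a s)" using tc[OF a b] tc[OF a sc] by auto
    qed
  next
    show "\<Inter> ((\<lambda>s. \<theta> (comp \<A> a s)) ` S) \<subseteq> \<theta> (comp \<A> a b)"
    proof (rule subsetI)
      fix p assume p: "p \<in> \<Inter> ((\<lambda>s. \<theta> (comp \<A> a s)) ` S)"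
      obtain x z where pxz: "p = (x,z)" by (cases p)
      have m: "\<forall>s\<in>S. (x,z) \<in> \<theta> (comp \<A> a s)" using p pxz by auto
      obtain s0 where s0: "s0 \<in> S" using ne by blast
      then obtain y where y: "(x,y) \<in> \<theta> a" "(y,z) \<in> \<theta> s0" using m tc a S by blast
      have "\<forall>s\<in>S. (y,z) \<in> \<theta> s"
      proof
        fix s assume s: "s \<in> S"
        then obtain y' where "(x,y') \<in> \<theta> a" "(y',z) \<in> \<theta> s" using m tc a S by blast
        then show "(y,z) \<in> \<theta> s" using y sva by (metis single_valuedD)
      qed
      then have "(y,z) \<in> \<theta> b" using tb by auto
      then show "p \<in> \<theta> (comp \<A> a b)" using tc a b y pxz by auto
    qed
  qed
  show "is_meet \<A> ((\<lambda>s. comp \<A> a s) ` S) (comp \<A> a b)"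
    unfolding is_meet_def
  proof (intro conjI ballI impI)
    show "comp \<A> a b \<in> carrier \<A>" using cc a b .
  next
    fix t assume "t \<in> (\<lambda>s. comp \<A> a s) ` S"
    then obtain s where s: "s \<in> S" "t = comp \<A> a s" by blast
    have sc: "s \<in> carrier \<A>" using s S by auto
    have "\<theta> (comp \<A> a b) \<subseteq> \<theta> (comp \<A> a s)" using key s by auto
    then show "leq \<A> (comp \<A> a b) t" using L[OF cc[OF a b] cc[OF a sc]] s by simp
  next
    fix c assume c: "c \<in> carrier \<A>" and up: "\<forall>t\<in>(\<lambda>s. comp \<A> a s) ` S. leq \<A> c t"
    have "\<forall>s\<in>S. \<theta> c \<subseteq> \<theta> (comp \<A> a s)"
    proof
      fix s assume s: "s \<in> S" hence sc: "s \<in> carrier \<A>" using S by auto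
      have "leq \<A> c (comp \<A> a s)" using up s by auto
      then show "\<theta> c \<subseteq> \<theta> (comp \<A> a s)" using L[OF c cc[OF a sc]] by simp
    qed
    then have "\<theta> c \<subseteq> \<theta> (comp \<A> a b)" using key by auto
    then show "leq \<A> c (comp \<A> a b)" using L[OF c cc[OF a b]] by simp
  qed
qed

end
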